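(* Let $n\ge0$, $d\ge 1$, $l>0$, and $m = 2^{n+1}-1+2l$. For integers $m'=2^{n+1}-\epsilon+2l'$ with $\epsilon\in\{0,1\}$, $l'\ge0$, set $$k^G_n(d,m') = \sum_{i\ge0}\binom{2^{n+1}-\epsilon}{d-2i}\binom{l'}{i},\qquad \bar k^C_n(d,m') = \sum_{i\ge0}\binom{2^{n+1}-1-\epsilon}{d-1-2i}\binom{l'}{i}.$$ Then $$\frac12\left[k^G_n(d,m-1)+\bar k^C_n(d,m)-k^G_n(d,m)\right] = \sum_{i\ge0}\binom{2^{n+1}-2}{d-1-2i}\binom{l-1}{i}.$$
   Context: Binomial coefficients $\binom{a}{b}$ are $0$ when $b<0$ or $b>a$. Note $m-1 = 2^{n+1}+2(l-1)$, so $k^G_n(d,m-1)$ uses $\epsilon=0$, $l'=l-1$, while $k^G_n(d,m)$ and $\bar k^C_n(d,m)$ use $\epsilon=1$, $l'=l$. *)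

theory Defs
  imports Complex_Main
begin

definition binom :: "int \<Rightarrow> int \<Rightarrow> int" where
  "binom a b = (if b < 0 \<or> b > a then 0 else int (nat a choose nat b))"

text \<open>For m' = 2^(n+1) - eps + 2 l': eps is determined by the parity of m', and l' by m'.\<close>
definition epsm :: "int \<Rightarrow> int" where
  "epsm m' = (if odd m' then 1 else 0)"

definition lprime :: "nat \<Rightarrow> int \<Rightarrow> int" where
  "lprime n m' = (m' - 2 ^ (n + 1) + epsm m') div 2"

text \<open>Sums over i >= 0; all terms with i > d vanish, so the range {0..d} suffices.\<close>
definition kG :: "nat \<Rightarrow> int \<Rightarrow> int \<Rightarrow> int" where
  "kG n d m' = (\<Sum>i\<in>{0..d}. binom (2 ^ (n + 1) - epsm m') (d - 2 * i) * binom (lprime n m') i)"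

definition kCbar :: "nat \<Rightarrow> int \<Rightarrow> int \<Rightarrow> int" where
  "kCbar n d m' = (\<Sum>i\<in>{0..d}. binom (2 ^ (n + 1) - 1 - epsm m') (d - 1 - 2 * i) * binom (lprime n m') i)"

end

theory Submission
  imports Defs
begin

lemma binom_pascal:
  assumes "a \<ge> 1"
  shows "binom a b = binom (a - 1) b + binom (a - 1) (b - 1)"
proof -
  consider "b < 0" | "b = 0" | "b > a" | "b = a" | "0 < b \<and> b < a" by linarith
  then show ?thesis
  proof cases
    case 5
    define p where "p = nat a - 1"
    define q where "q = nat b - 1"
    have p: "nat a = Suc p" and q: "nat b = Suc q" using 5 unfolding p_def q_def by auto
    have "nat (a - 1) = p" "nat (b - 1) = q" using p q by auto
    then show ?thesis using 5 p q unfolding binom_def by simp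
  qed (use assms in \<open>auto simp: binom_def\<close>)
qed

lemma shift_sum:
  fixes F :: "int \<Rightarrow> int"
  assumes "F (d + 1) = 0" "d \<ge> 0"
  shows "(\<Sum>i\<in>{0..d}. F i * binom L (i - 1)) = (\<Sum>i\<in>{0..d}. F (i + 1) * binom L i)"
proof -
  obtain k where k: "d = int k" using assms(2) by (metis nonneg_eq_int)
  have "(\<Sum>i\<in>{0..int k}. F i * binom L (i - 1)) = (\<Sum>i\<in>{0..int k}. F (i + 1) * binom L i) - F (int k + 1) * binom L (int k)"
  proof (induction k)
    case 0
    then show ?case by (simp add: binom_def)
  next
    case (Suc k)
    have e: "{0..int (Suc k)} = insert (int k + 1) {0..int k}" by auto
    show ?case unfolding e using Suc by (simp add: algebra_simps)
  qed
  then show ?thesis using assms k by simp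
qed

theorem lemma6p5:
  fixes n :: nat and d l m :: int
  assumes "d \<ge> 1" and "l > 0" and "m = 2 ^ (n + 1) - 1 + 2 * l"
  shows "(real_of_int (kG n d (m - 1)) + real_of_int (kCbar n d m) - real_of_int (kG n d m)) / 2
         = real_of_int (\<Sum>i\<in>{0..d}. binom (2 ^ (n + 1) - 2) (d - 1 - 2 * i) * binom (l - 1) i)"
proof -
  define N :: int where "N = 2 ^ (n + 1)"
  have "(2::int) ^ 1 \<le> 2 ^ (n + 1)" by (rule power_increasing) auto
  then have N2: "N \<ge> 2" unfolding N_def by simp
  have om: "odd m" using assms(3) by simp
  have e1: "epsm m = 1" using om by (simp add: epsm_def)
  have e0: "epsm (m - 1) = 0" using om by (simp add: epsm_def)
  have l1: "lprime n m = l" using assms(3) e1 by (simp add: lprime_def)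
  have l0: "lprime n (m - 1) = l - 1" using assms(3) e0 by (simp add: lprime_def)
  define bl where "bl i = binom (l - 1) i" for i
  have blp: "binom l i = bl i + bl (i - 1)" for i
    using binom_pascal[of l i] assms(2) by (simp add: bl_def)
  have A: "kG n d (m - 1) = (\<Sum>i\<in>{0..d}. binom N (d - 2 * i) * bl i)"
    unfolding kG_def e0 l0 N_def bl_def by simp
  have "kG n d m = (\<Sum>i\<in>{0..d}. binom (N - 1) (d - 2 * i) * bl i)
      + (\<Sum>i\<in>{0..d}. binom (N - 1) (d - 2 * i) * bl (i - 1))"
    unfolding kG_def e1 l1 N_def blp by (simp add: algebra_simps sum.distrib)
  also have "(\<Sum>i\<in>{0..d}. binom (N - 1) (d - 2 * i) * bl (i - 1))
     = (\<Sum>i\<in>{0..d}. binom (N - 1) (d - 2 * (i + 1)) * bl i)"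
    unfolding bl_def
    by (rule shift_sum[where F = "\<lambda>i. binom (N - 1) (d - 2 * i)"]) (use assms(1) in \<open>auto simp: binom_def\<close>)
  finally have B: "kG n d m = (\<Sum>i\<in>{0..d}. binom (N - 1) (d - 2 * i) * bl i)
      + (\<Sum>i\<in>{0..d}. binom (N - 1) (d - 2 * (i + 1)) * bl i)" .
  have "kCbar n d m = (\<Sum>i\<in>{0..d}. binom (N - 2) (d - 1 - 2 * i) * bl i)
      + (\<Sum>i\<in>{0..d}. binom (N - 2) (d - 1 - 2 * i) * bl (i - 1))"
    unfolding kCbar_def e1 l1 N_def blp by (simp add: algebra_simps sum.distrib)
  also have "(\<Sum>i\<in>{0..d}. binom (N - 2) (d - 1 - 2 * i) * bl (i - 1))
     = (\<Sum>i\<in>{0..d}. binom (N - 2) (d - 1 - 2 * (i + 1)) * bl i)"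
    unfolding bl_def
    by (rule shift_sum[where F = "\<lambda>i. binom (N - 2) (d - 1 - 2 * i)"]) (use assms(1) in \<open>auto simp: binom_def\<close>)
  finally have C: "kCbar n d m = (\<Sum>i\<in>{0..d}. binom (N - 2) (d - 1 - 2 * i) * bl i)
      + (\<Sum>i\<in>{0..d}. binom (N - 2) (d - 1 - 2 * (i + 1)) * bl i)" .
  have pw: "binom N k + binom (N - 2) (k - 1) + binom (N - 2) (k - 3) - binom (N - 1) k - binom (N - 1) (k - 2)
     = 2 * binom (N - 2) (k - 1)" for k
  proof -
    have a: "binom N k = binom (N - 1) k + binom (N - 1) (k - 1)"
      using binom_pascal[of N k] N2 by simp
    have b: "binom (N - 1) (k - 1) = binom (N - 2) (k - 1) + binom (N - 2) (k - 2)"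
      using binom_pascal[of "N - 1" "k - 1"] N2 by (simp add: algebra_simps)
    have c: "binom (N - 1) (k - 2) = binom (N - 2) (k - 2) + binom (N - 2) (k - 3)"
      using binom_pascal[of "N - 1" "k - 2"] N2 by (simp add: algebra_simps)
    show ?thesis using a b c by simp
  qed
  have "kG n d (m - 1) + kCbar n d m - kG n d m
     = (\<Sum>i\<in>{0..d}. (binom N (d - 2 * i) + binom (N - 2) (d - 1 - 2 * i) + binom (N - 2) (d - 1 - 2 * (i + 1))
          - binom (N - 1) (d - 2 * i) - binom (N - 1) (d - 2 * (i + 1))) * bl i)"
    unfolding A B C by (simp add: algebra_simps sum.distrib sum_subtractf)
  also have "\<dots> = (\<Sum>i\<in>{0..d}. 2 * (binom (N - 2) (d - 1 - 2 * i) * bl i))"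
  proof (rule sum.cong[OF refl])
    fix i
    have q: "d - 1 - 2 * (i + 1) = (d - 2 * i) - 3" "d - 2 * (i + 1) = (d - 2 * i) - 2"
      "d - 1 - 2 * i = (d - 2 * i) - 1" by auto
    show "(binom N (d - 2 * i) + binom (N - 2) (d - 1 - 2 * i) + binom (N - 2) (d - 1 - 2 * (i + 1))
          - binom (N - 1) (d - 2 * i) - binom (N - 1) (d - 2 * (i + 1))) * bl i
        = 2 * (binom (N - 2) (d - 1 - 2 * i) * bl i)"
      unfolding q pw[of "d - 2 * i"] by simp
  qed
  finally have "kG n d (m - 1) + kCbar n d m - kG n d m
      = 2 * (\<Sum>i\<in>{0..d}. binom (N - 2) (d - 1 - 2 * i) * bl i)"
    by (simp add: sum_distrib_left)
  then show ?thesis unfolding N_def bl_def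
    using arg_cong[where f = real_of_int] by fastforce
qed

end
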